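(* Let $n\ge 1$ and $m\ge 2$ be integers, and let $\chi_{n,m}\colon\mathbb{F}_2^n\to\mathbb{F}_2^n$ be given by $\chi_{n,m}(x)=y$ with $y_i=x_i+x_{i+m}(x_{i+m-1}+1)(x_{i+m-2}+1)\cdots(x_{i+1}+1)$ for $i\in\{0,\dots,n-1\}$, indices modulo $n$. Then $\chi_{n,m}$ is a permutation of $\mathbb{F}_2^n$ if and only if $m\nmid n$. In particular, if $m\nmid n$ and $\ell=\lfloor n/m\rfloor$, then $$\chi_{n,m}^{-1}=\theta_{m,0}+\theta_{m,1}+\theta_{m,2}+\cdots+\theta_{m,\ell},$$ equivalently, $\chi_{n,m}^{-1}(x)=y$ with $y_i=x_i+\sum_{k=1}^{\ell}x_{i+mk}\prod_{1\le j\le mk-1,\ m\nmid j}(x_{i+j}+1)$; moreover the algebraic degree of $\chi_{n,m}^{-1}$ is $(m-1)\ell+1$.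
   Context: For a nonnegative integer $k$, $\theta_{m,k}\colon\mathbb{F}_2^n\to\mathbb{F}_2^n$ is defined by $\theta_{m,k}(x)=y$ with $y_i=x_{i+mk}\prod_{1\le j\le mk-1,\ m\nmid j}(x_{i+j}+1)$ (indices modulo $n$); $\theta_{m,0}$ is the identity map. Sums of maps are pointwise sums. The algebraic degree of a map $\mathbb{F}_2^n\to\mathbb{F}_2^n$ is the maximum degree of the algebraic normal forms of its coordinate functions. *)

theory Defs
  imports Main "HOL-Library.Z2"
begin

text \<open>F_2 is the two-element field \<open>bit\<close>. A vector of F_2^n is a function
  \<open>nat \<Rightarrow> bit\<close> that vanishes outside the index range 0..n-1.\<close>

definition vecs :: "nat \<Rightarrow> (nat \<Rightarrow> bit) set" where
  "vecs n = {x. \<forall>i\<ge>n. x i = 0}"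

definition chi :: "nat \<Rightarrow> nat \<Rightarrow> (nat \<Rightarrow> bit) \<Rightarrow> (nat \<Rightarrow> bit)" where
  "chi n m x = (\<lambda>i. if i < n then
      x i + x ((i + m) mod n) * (\<Prod>j\<in>{1..<m}. x ((i + j) mod n) + 1)
    else 0)"

definition theta :: "nat \<Rightarrow> nat \<Rightarrow> nat \<Rightarrow> (nat \<Rightarrow> bit) \<Rightarrow> (nat \<Rightarrow> bit)" where
  "theta n m k x = (\<lambda>i. if i < n then
      (if k = 0 then x i
       else x ((i + m * k) mod n) *
            (\<Prod>j\<in>{j. 1 \<le> j \<and> j \<le> m * k - 1 \<and> \<not> m dvd j}. x ((i + j) mod n) + 1))
    else 0)"

definition theta_sum :: "nat \<Rightarrow> nat \<Rightarrow> nat \<Rightarrow> (nat \<Rightarrow> bit) \<Rightarrow> (nat \<Rightarrow> bit)" where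
  "theta_sum n m l x = (\<lambda>i. \<Sum>k\<in>{0..l}. theta n m k x i)"

text \<open>Algebraic normal form: the coefficient of the monomial prod_{i in S} x_i of a
  Boolean function f on F_2^n is the sum of f over the indicator vectors of subsets of S.\<close>
definition ind_vec :: "nat set \<Rightarrow> (nat \<Rightarrow> bit)" where
  "ind_vec T = (\<lambda>i. if i \<in> T then 1 else 0)"

definition anf_coeff :: "((nat \<Rightarrow> bit) \<Rightarrow> bit) \<Rightarrow> nat set \<Rightarrow> bit" where
  "anf_coeff f S = (\<Sum>T\<in>Pow S. f (ind_vec T))"

definition bool_degree :: "nat \<Rightarrow> ((nat \<Rightarrow> bit) \<Rightarrow> bit) \<Rightarrow> nat" where
  "bool_degree n f = Max ({card S | S. S \<subseteq> {0..<n} \<and> anf_coeff f S \<noteq> 0} \<union> {0})"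

definition alg_degree :: "nat \<Rightarrow> ((nat \<Rightarrow> bit) \<Rightarrow> (nat \<Rightarrow> bit)) \<Rightarrow> nat" where
  "alg_degree n F = Max ({bool_degree n (\<lambda>x. F x i) | i. i < n} \<union> {0})"

end

theory Submission
  imports Defs
begin


lemma bit_cases2: "(x::bit) = 0 \<or> x = 1" by auto

lemma bit_prod_eq1: "finite A \<Longrightarrow> ((\<Prod>a\<in>A. f a) = (1::bit)) \<longleftrightarrow> (\<forall>a\<in>A. f a = 1)"
proof -
  assume fin: "finite A"
  have "((\<Prod>a\<in>A. f a) = (1::bit)) = ((\<Prod>a\<in>A. f a) \<noteq> 0)" by simp
  also have "\<dots> = (\<forall>a\<in>A. f a \<noteq> 0)" using prod_zero_iff[OF fin, of f] by blast
  also have "\<dots> = (\<forall>a\<in>A. f a = 1)" by simp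
  finally show ?thesis .
qed

lemma bit_plus1_eq1: "((z::bit) + 1 = 1) \<longleftrightarrow> z = 0"
  by (metis add.commute add_cancel_right_right)

lemma bit_add_self: "(a::bit) + a = 0" using bit_cases2[of a] by auto

definition gblk :: "nat \<Rightarrow> (nat \<Rightarrow> bit) \<Rightarrow> nat \<Rightarrow> bit" where
  "gblk m z p = (\<Prod>t\<in>{1..<m}. z (p+t) + 1)"

fun thr :: "nat \<Rightarrow> (nat \<Rightarrow> bit) \<Rightarrow> nat \<Rightarrow> nat \<Rightarrow> bit" where
  "thr m z 0 p = z p"
| "thr m z (Suc k) p = gblk m z p * thr m z k (p+m)"

definition chiN :: "nat \<Rightarrow> (nat \<Rightarrow> bit) \<Rightarrow> nat \<Rightarrow> bit" where
  "chiN m X = (\<lambda>q. X q + X (q+m) * gblk m X q)"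

lemma gblk_eq1: "gblk m z p = 1 \<longleftrightarrow> (\<forall>t\<in>{1..<m}. z (p+t) = 0)"
  unfolding gblk_def by (simp add: bit_prod_eq1 bit_plus1_eq1)

lemma gblk_eq0: "gblk m z p = 0 \<longleftrightarrow> \<not> (\<forall>t\<in>{1..<m}. z (p+t) = 0)"
  using gblk_eq1[of m z p] bit_not_one_iff by metis

lemma chiN_eq1: "chiN m X q = 1 \<longleftrightarrow> (X q = 1 \<longleftrightarrow> \<not> (X (q+m) = 1 \<and> gblk m X q = 1))"
  unfolding chiN_def using bit_cases2[of "X q"] bit_cases2[of "X (q+m)"] bit_cases2[of "gblk m X q"]
  by auto

lemma lem1:
  assumes "X (p+m) = 1 \<or> gblk m X (p+m) = 1"
  shows "gblk m X p = gblk m (chiN m X) p"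
proof -
  have "gblk m X p = 1 \<longleftrightarrow> gblk m (chiN m X) p = 1"
  proof
    assume a: "gblk m X p = 1"
    show "gblk m (chiN m X) p = 1" unfolding gblk_eq1
    proof
      fix t assume t: "t \<in> {1..<m}"
      have x0: "X (p+t) = 0" using a t gblk_eq1 by blast
      have "\<not> (X (p+t+m) = 1 \<and> gblk m X (p+t) = 1)"
      proof
        assume b: "X (p+t+m) = 1 \<and> gblk m X (p+t) = 1"
        show False
        proof (cases "X (p+m) = 1")
          case True
          have "m - t \<in> {1..<m}" using t by auto
          then have "X (p+t+(m-t)) = 0" using b gblk_eq1 by blast
          then show False using True t by simp
        next
          case False
          then have "gblk m X (p+m) = 1" using assms by auto
          moreover have "t \<in> {1..<m}" using t by auto
          ultimately have "X (p+m+t) = 0" using gblk_eq1 by blast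
          then show False using b by (simp add: add.commute add.left_commute)
        qed
      qed
      then show "chiN m X (p+t) = 0" using x0 chiN_eq1[of m X "p+t"] bit_not_one_iff by auto
    qed
  next
    assume a: "gblk m (chiN m X) p = 1"
    show "gblk m X p = 1" unfolding gblk_eq1
    proof (rule ccontr)
      assume "\<not> (\<forall>t\<in>{1..<m}. X (p + t) = 0)"
      then obtain t where t: "t \<in> {1..<m}" "X (p+t) = 1" by auto
      have "chiN m X (p+t) = 0" using a t gblk_eq1 by blast
      then have b: "X (p+t+m) = 1 \<and> gblk m X (p+t) = 1"
        using chiN_eq1[of m X "p+t"] t bit_not_one_iff by auto
      show False
      proof (cases "X (p+m) = 1")
        case True
        have "m - t \<in> {1..<m}" using t by auto
        then have "X (p+t+(m-t)) = 0" using b gblk_eq1 by blast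
        then show False using True t by simp
      next
        case False
        then have "gblk m X (p+m) = 1" using assms by auto
        then have "X (p+m+t) = 0" using t gblk_eq1 by blast
        then show False using b by (simp add: add.commute add.left_commute)
      qed
    qed
  qed
  then show ?thesis using bit_cases2 by metis
qed

lemma thr_eq1_Suc: "thr m z (Suc k) p = 1 \<longleftrightarrow> gblk m z p = 1 \<and> thr m z k (p+m) = 1"
  using bit_cases2[of "gblk m z p"] by auto

lemma lem2: "thr m (chiN m X) k p = 1 \<Longrightarrow> X p = 1 \<or> gblk m X p = 1"
proof (induction k arbitrary: p)
  case 0
  then show ?case using chiN_eq1[of m X p] by auto
next
  case (Suc k)
  then have "gblk m (chiN m X) p = 1" "thr m (chiN m X) k (p+m) = 1"
    using thr_eq1_Suc by blast+
  then show ?case using Suc.IH lem1 by metis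
qed

lemma lem3: "thr m X k i = thr m (chiN m X) k i + thr m X (Suc k) i"
proof (induction k arbitrary: i)
  case 0
  have "X i = X i + (X (i+m) * gblk m X i + gblk m X i * X (i + m))"
    by (simp only: mult.commute[of "gblk m X i"] bit_add_self add_0_right)
  then show ?case by (simp only: thr.simps chiN_def add.assoc mult_1_right)
next
  case (Suc k)
  have e: "gblk m X i * thr m (chiN m X) k (i+m) = gblk m (chiN m X) i * thr m (chiN m X) k (i+m)"
  proof (cases "thr m (chiN m X) k (i+m) = 1")
    case True
    then show ?thesis using lem2 lem1 by metis
  next
    case False
    then show ?thesis by simp
  qed
  have "thr m X (Suc k) i = gblk m X i * thr m X k (i+m)" by (simp only: thr.simps)
  also have "\<dots> = gblk m X i * (thr m (chiN m X) k (i+m) + thr m X (Suc k) (i+m))"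
    by (subst Suc.IH) (rule refl)
  also have "\<dots> = gblk m X i * thr m (chiN m X) k (i+m) + gblk m X i * thr m X (Suc k) (i+m)"
    by (rule distrib_left)
  also have "\<dots> = thr m (chiN m X) (Suc k) i + thr m X (Suc (Suc k)) i"
    unfolding e by (simp only: thr.simps)
  finally show ?case .
qed

lemma lem4: "X i = (\<Sum>k<L. thr m (chiN m X) k i) + thr m X L i"
proof (induction L)
  case 0 then show ?case by simp
next
  case (Suc L)
  then show ?case using lem3[of m X L i] by (simp only: sum.lessThan_Suc add.assoc)
qed

definition per :: "nat \<Rightarrow> (nat \<Rightarrow> bit) \<Rightarrow> nat \<Rightarrow> bit" where
  "per n x = (\<lambda>p. x (p mod n))"

definition Zs :: "nat \<Rightarrow> nat \<Rightarrow> nat set" where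
  "Zs m k = {j. 1 \<le> j \<and> j \<le> m * k - 1 \<and> \<not> m dvd j}"

lemma ndvd_pos: "\<not> m dvd (j::nat) \<Longrightarrow> Suc 0 \<le> j" by (cases j) auto

lemma Zs_alt: "Zs m k = {j. j < m * k \<and> \<not> m dvd j}"
  unfolding Zs_def by (auto dest: ndvd_pos)

lemma Zs_finite: "finite (Zs m k)"
  unfolding Zs_alt by auto

lemma Zs_Suc:
  assumes "m \<ge> 1"
  shows "Zs m (Suc k) = {1..<m} \<union> (\<lambda>j. j + m) ` Zs m k"
proof (rule set_eqI)
  fix j
  show "j \<in> Zs m (Suc k) \<longleftrightarrow> j \<in> {1..<m} \<union> (\<lambda>j. j + m) ` Zs m k"
  proof
    assume a: "j \<in> Zs m (Suc k)"
    then have a1: "j < m + m * k" and a2: "\<not> m dvd j" unfolding Zs_alt by auto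
    show "j \<in> {1..<m} \<union> (\<lambda>j. j + m) ` Zs m k"
    proof (cases "j < m")
      case True
      then show ?thesis using ndvd_pos[OF a2] by simp
    next
      case False
      have "\<not> m dvd (j - m)"
      proof
        assume "m dvd (j - m)"
        then have "m dvd (j - m) + m" by simp
        then show False using False a2 by simp
      qed
      moreover have "j - m < m * k" using a1 False by linarith
      ultimately have "j - m \<in> Zs m k" unfolding Zs_alt by simp
      moreover have "j = (j - m) + m" using False by simp
      ultimately show ?thesis by blast
    qed
  next
    assume a: "j \<in> {1..<m} \<union> (\<lambda>j. j + m) ` Zs m k"
    show "j \<in> Zs m (Suc k)"
    proof (cases "j \<in> {1..<m}")
      case True
      then have "\<not> m dvd j" using dvd_imp_le[of m j] by auto
      moreover have "j < m * Suc k" using True by simp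
      ultimately show ?thesis unfolding Zs_alt by simp
    next
      case False
      then obtain j' where j': "j' \<in> Zs m k" "j = j' + m" using a by blast
      then have "j' < m * k" "\<not> m dvd j'" unfolding Zs_alt by auto
      moreover have "\<not> m dvd j' + m" using \<open>\<not> m dvd j'\<close> by simp
      ultimately show ?thesis unfolding Zs_alt j'(2) by simp
    qed
  qed
qed

lemma thr_closed:
  assumes "m \<ge> 1"
  shows "thr m z k p = z (p + m * k) * (\<Prod>j\<in>Zs m k. z (p + j) + 1)"
proof (induction k arbitrary: p)
  case 0
  have "Zs m 0 = {}" unfolding Zs_alt by simp
  then show ?case by simp
next
  case (Suc k)
  have disj: "{1..<m} \<inter> (\<lambda>j. j + m) ` Zs m k = {}" by auto
  have "(\<Prod>j\<in>Zs m (Suc k). z (p + j) + 1) =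
        (\<Prod>j\<in>{1..<m}. z (p + j) + 1) * (\<Prod>j\<in>(\<lambda>j. j + m) ` Zs m k. z (p + j) + 1)"
    unfolding Zs_Suc[OF assms] by (rule prod.union_disjoint) (auto simp: Zs_finite)
  also have "(\<Prod>j\<in>(\<lambda>j. j + m) ` Zs m k. z (p + j) + 1) = (\<Prod>j\<in>Zs m k. z (p + m + j) + 1)"
    by (subst prod.reindex) (auto simp: inj_on_def add.commute add.left_commute)
  finally have e: "(\<Prod>j\<in>Zs m (Suc k). z (p + j) + 1) =
        gblk m z p * (\<Prod>j\<in>Zs m k. z (p + m + j) + 1)" unfolding gblk_def .
  have "thr m z (Suc k) p = gblk m z p * (z (p + m + m * k) * (\<Prod>j\<in>Zs m k. z (p + m + j) + 1))"
    using Suc.IH by simp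
  also have "\<dots> = z (p + m * Suc k) * (\<Prod>j\<in>Zs m (Suc k). z (p + j) + 1)"
    unfolding e by (simp add: algebra_simps)
  finally show ?case .
qed

lemma theta_thr:
  assumes "m \<ge> 1" "i < n"
  shows "theta n m k x i = thr m (per n x) k i"
proof (cases "k = 0")
  case True then show ?thesis using assms by (simp add: theta_def per_def)
next
  case False
  then show ?thesis using assms unfolding theta_def thr_closed[OF assms(1)] per_def Zs_def by simp
qed

lemma chi_per:
  assumes "n \<ge> 1"
  shows "per n (chi n m x) = chiN m (per n x)"
proof
  fix p
  show "per n (chi n m x) p = chiN m (per n x) p"
    using assms unfolding per_def chi_def chiN_def gblk_def by (simp add: mod_add_left_eq)
qed

lemma bit_mult_plus1: "(a::bit) * (a + 1) = 0" using bit_cases2[of a] by auto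

lemma thr_vanish:
  assumes "n \<ge> 1" "m \<ge> 2" "\<not> m dvd n"
  shows "thr m (per n x) (n div m + 1) i = 0"
proof -
  define K where "K = n div m + 1"
  define j0 where "j0 = m * K - n"
  have nlt: "n < m * K"
  proof -
    have "m * (n div m) + n mod m = n" by (rule mult_div_mod_eq)
    moreover have "n mod m < m" using assms by simp
    ultimately show ?thesis unfolding K_def by (simp only: distrib_left mult_1_right)
  qed
  have j0Z: "j0 \<in> Zs m K"
  proof -
    have "\<not> m dvd j0"
    proof
      assume "m dvd j0"
      then have "m dvd m * K - j0" by (simp add: dvd_diff_nat)
      moreover have "m * K - j0 = n" unfolding j0_def using nlt by simp
      ultimately show False using assms by simp
    qed
    then show ?thesis unfolding Zs_alt j0_def using nlt assms by auto
  qed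
  have eq: "per n x (i + j0) = per n x (i + m * K)"
  proof -
    have "i + m * K = (i + j0) + n" unfolding j0_def using nlt by simp
    then show ?thesis unfolding per_def by (simp only: mod_add_self2)
  qed
  have "thr m (per n x) K i = per n x (i + m*K) * (\<Prod>j\<in>Zs m K. per n x (i+j) + 1)"
    by (rule thr_closed) (use assms in simp)
  also have "\<dots> = per n x (i + m * K) * ((per n x (i + j0) + 1) *
          (\<Prod>j\<in>Zs m K - {j0}. per n x (i + j) + 1))"
    by (simp only: prod.remove[OF Zs_finite j0Z])
  also have "\<dots> = 0" by (simp only: eq mult.assoc[symmetric] bit_mult_plus1 mult_zero_left)
  finally show ?thesis unfolding K_def .
qed



lemma vecs_finite: "finite (vecs n)"
proof -
  have "vecs n \<subseteq> ind_vec ` Pow {0..<n}"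
  proof
    fix x assume x: "x \<in> vecs n"
    have "x = ind_vec {i. i < n \<and> x i = 1}"
    proof
      fix i show "x i = ind_vec {i. i < n \<and> x i = 1} i"
        using x bit_cases2[of "x i"] unfolding vecs_def ind_vec_def by (cases "i < n") auto
    qed
    then show "x \<in> ind_vec ` Pow {0..<n}" by auto
  qed
  then show ?thesis by (rule finite_subset) simp
qed

lemma chi_maps: "chi n m ` vecs n \<subseteq> vecs n"
  unfolding vecs_def chi_def by auto

lemma theta_ge: "i \<ge> n \<Longrightarrow> theta n m k x i = 0"
  unfolding theta_def by simp

lemma left_inv:
  assumes "n \<ge> 1" "m \<ge> 2" "\<not> m dvd n" "x \<in> vecs n"
  shows "theta_sum n m (n div m) (chi n m x) = x"
proof
  fix i
  show "theta_sum n m (n div m) (chi n m x) i = x i"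
  proof (cases "i < n")
    case True
    have "theta_sum n m (n div m) (chi n m x) i = (\<Sum>k\<in>{0..n div m}. thr m (per n (chi n m x)) k i)"
      unfolding theta_sum_def using theta_thr[of m i n] True assms by simp
    also have "\<dots> = (\<Sum>k<Suc (n div m). thr m (chiN m (per n x)) k i)"
      unfolding chi_per[OF assms(1)] atLeast0AtMost lessThan_Suc_atMost ..
    also have "\<dots> = per n x i"
    proof -
      have v: "thr m (per n x) (Suc (n div m)) i = 0" using thr_vanish[OF assms(1-3), of x i] by simp
      have "per n x i = (\<Sum>k<Suc (n div m). thr m (chiN m (per n x)) k i) + thr m (per n x) (Suc (n div m)) i"
        by (rule lem4)
      then show ?thesis unfolding v add_0_right by simp
    qed
    also have "\<dots> = x i" unfolding per_def using True by simp
    finally show ?thesis .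
  next
    case False
    then show ?thesis using assms(4) unfolding theta_sum_def vecs_def by (simp add: theta_ge)
  qed
qed

lemma bij_if:
  assumes "n \<ge> 1" "m \<ge> 2" "\<not> m dvd n"
  shows "bij_betw (chi n m) (vecs n) (vecs n)"
proof -
  have inj: "inj_on (chi n m) (vecs n)"
    by (rule inj_on_inverseI[where g = "theta_sum n m (n div m)"]) (use left_inv assms in blast)
  have "chi n m ` vecs n = vecs n" by (rule endo_inj_surj[OF vecs_finite chi_maps inj])
  then show ?thesis using inj unfolding bij_betw_def by blast
qed

lemma inv_eq:
  assumes "n \<ge> 1" "m \<ge> 2" "\<not> m dvd n" "y \<in> vecs n"
  shows "the_inv_into (vecs n) (chi n m) y = theta_sum n m (n div m) y"
proof -
  have b: "bij_betw (chi n m) (vecs n) (vecs n)" by (rule bij_if[OF assms(1-3)])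
  then obtain x where x: "x \<in> vecs n" "y = chi n m x" using assms(4) unfolding bij_betw_def by blast
  have "the_inv_into (vecs n) (chi n m) y = x"
    unfolding x(2) by (rule the_inv_into_f_f) (use b x in \<open>auto simp: bij_betw_def\<close>)
  then show ?thesis using left_inv[OF assms(1-3) x(1)] x(2) by simp
qed

lemma not_bij_if:
  assumes "n \<ge> 1" "m \<ge> 2" "m dvd n"
  shows "\<not> bij_betw (chi n m) (vecs n) (vecs n)"
proof
  assume b: "bij_betw (chi n m) (vecs n) (vecs n)"
  define w :: "nat \<Rightarrow> bit" where "w = (\<lambda>i. if i < n \<and> m dvd i then 1 else 0)"
  have wmod: "w (p mod n) = (if m dvd p then 1 else 0)" for p
  proof -
    have "p mod n < n" using assms by simp
    moreover have "m dvd (p mod n) \<longleftrightarrow> m dvd p"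
      using mod_mod_cancel[OF assms(3), of p] by (simp add: dvd_eq_mod_eq_0)
    ultimately show ?thesis unfolding w_def by simp
  qed
  have w_in: "w \<in> vecs n" unfolding w_def vecs_def by simp
  have z_in: "(\<lambda>_. 0) \<in> vecs n" unfolding vecs_def by simp
  have wne: "w \<noteq> (\<lambda>_. 0)"
  proof
    assume "w = (\<lambda>_. 0)"
    then have "w 0 = 0" by simp
    then show False unfolding w_def using assms by simp
  qed
  have cz: "chi n m (\<lambda>_. 0) = (\<lambda>_. 0)" unfolding chi_def by (rule ext) simp
  have cw: "chi n m w = (\<lambda>_. 0)"
  proof
    fix i
    show "chi n m w i = 0"
    proof (cases "i < n")
      case True
      have wi: "w i = w (i mod n)" using True by simp
      show ?thesis
      proof (cases "m dvd i")
        case True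
        have "(\<Prod>j\<in>{1..<m}. w ((i + j) mod n) + 1) = (\<Prod>j\<in>{1..<m}. 1)"
        proof (rule prod.cong)
          fix j assume "j \<in> {1..<m}"
          then have "\<not> m dvd (i + j)" using True by (auto simp: dvd_add_right_iff dest: dvd_imp_le)
          then show "w ((i + j) mod n) + 1 = 1" unfolding wmod by simp
        qed simp
        moreover have "w ((i + m) mod n) = 1" unfolding wmod using True by simp
        moreover have "w i = 1" unfolding wi wmod using True by simp
        ultimately show ?thesis unfolding chi_def using \<open>i < n\<close> by simp
      next
        case False
        have "w ((i + m) mod n) = 0" unfolding wmod using False by simp
        moreover have "w i = 0" unfolding wi wmod using False by simp
        ultimately show ?thesis unfolding chi_def using \<open>i < n\<close> by simp
      qed
    next
      case False
      then show ?thesis unfolding chi_def by simp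
    qed
  qed
  have "inj_on (chi n m) (vecs n)" using b bij_betw_def by blast
  then show False using w_in z_in wne cw cz unfolding inj_on_def by metis
qed



lemma mod_shift_inj1:
  assumes "a \<le> b" "(i + a) mod n = (i + b) mod n" "b < (n::nat)"
  shows "a = b"
proof -
  have "n dvd (i + b) - (i + a)" using mod_eq_dvd_iff_nat[of "i+a" "i+b" n] assms by simp
  then have "n dvd b - a" by simp
  then show ?thesis using assms by (cases "b - a = 0") (auto dest: dvd_imp_le)
qed

lemma mod_shift_inj: "inj_on (\<lambda>j. (i + j) mod n) {0..<(n::nat)}"
  unfolding inj_on_def
proof (intro ballI impI)
  fix x y :: nat assume "x \<in> {0..<n}" "y \<in> {0..<n}" "(i + x) mod n = (i + y) mod n"
  then show "x = y" using mod_shift_inj1[of x y i n] mod_shift_inj1[of y x i n] by fastforce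
qed

lemma card_Zs: "m \<ge> 1 \<Longrightarrow> card (Zs m k) = (m - 1) * k"
proof (induction k)
  case 0 then show ?case unfolding Zs_alt by simp
next
  case (Suc k)
  have "card (Zs m (Suc k)) = card {1..<m} + card ((\<lambda>j. j + m) ` Zs m k)"
    unfolding Zs_Suc[OF Suc.prems] by (rule card_Un_disjoint) (auto simp: Zs_finite)
  also have "card ((\<lambda>j. j + m) ` Zs m k) = card (Zs m k)" by (rule card_image) (simp add: inj_on_def)
  finally show ?case using Suc by simp
qed

lemma anf_sum: "finite K \<Longrightarrow> anf_coeff (\<lambda>x. \<Sum>k\<in>K. f k x) S = (\<Sum>k\<in>K. anf_coeff (f k) S)"
  unfolding anf_coeff_def by (rule sum.swap)

lemma anf_cong: "(\<And>T. T \<subseteq> S \<Longrightarrow> f (ind_vec T) = g (ind_vec T)) \<Longrightarrow> anf_coeff f S = anf_coeff g S"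
  unfolding anf_coeff_def by (rule sum.cong) auto

lemma bit_of_nat_pow2: "(of_nat (2 ^ c) :: bit) = (if c = 0 then 1 else 0)"
  by (cases c) auto

lemma anf_prod:
  assumes "finite S" "finite B" "a \<notin> B"
  shows "anf_coeff (\<lambda>x. x a * (\<Prod>b\<in>B. x b + 1)) S =
         (if a \<in> S then of_nat (2 ^ card (S - B - {a})) else 0)"
proof -
  have fv: "ind_vec T a * (\<Prod>b\<in>B. ind_vec T b + 1) = (if a \<in> T \<and> T \<inter> B = {} then 1 else 0)" for T
  proof -
    have "(\<Prod>b\<in>B. ind_vec T b + 1) = (if T \<inter> B = {} then 1 else 0)"
    proof (cases "T \<inter> B = {}")
      case True
      then have "(\<Prod>b\<in>B. ind_vec T b + 1) = (\<Prod>b\<in>B. 1)"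
        by (intro prod.cong) (auto simp: ind_vec_def)
      then show ?thesis using True by simp
    next
      case False
      then obtain b where b: "b \<in> B" "b \<in> T" by auto
      then have "ind_vec T b + 1 = 0" by (simp add: ind_vec_def)
      then have "(\<Prod>b\<in>B. ind_vec T b + 1) = 0" using b assms(2) by (metis prod_zero_iff)
      then show ?thesis using False by simp
    qed
    then show ?thesis by (simp add: ind_vec_def)
  qed
  define C where "C = {T \<in> Pow S. a \<in> T \<and> T \<inter> B = {}}"
  have "anf_coeff (\<lambda>x. x a * (\<Prod>b\<in>B. x b + 1)) S = (\<Sum>T\<in>Pow S. if a \<in> T \<and> T \<inter> B = {} then 1 else 0)"
    unfolding anf_coeff_def fv ..
  also have "\<dots> = of_nat (card C)"
    unfolding C_def by (simp only: sum.inter_filter[symmetric] finite_Pow_iff assms(1) sum_constant mult_1_right)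
  also have "\<dots> = (if a \<in> S then of_nat (2 ^ card (S - B - {a})) else 0)"
  proof (cases "a \<in> S")
    case True
    have "C = insert a ` Pow (S - B - {a})"
    proof (rule set_eqI)
      fix T
      show "T \<in> C \<longleftrightarrow> T \<in> insert a ` Pow (S - B - {a})"
      proof
        assume "T \<in> C"
        then have "T = insert a (T - {a})" "T - {a} \<in> Pow (S - B - {a})" unfolding C_def by auto
        then show "T \<in> insert a ` Pow (S - B - {a})" by blast
      next
        assume "T \<in> insert a ` Pow (S - B - {a})"
        then show "T \<in> C" unfolding C_def using True assms(3) by auto
      qed
    qed
    moreover have "inj_on (insert a) (Pow (S - B - {a}))"
      unfolding inj_on_def by blast
    ultimately have "card C = card (Pow (S - B - {a}))"
      by (simp only: card_image)
    also have "\<dots> = 2 ^ card (S - B - {a})" using assms(1) by (simp add: card_Pow)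
    finally have cC: "card C = 2 ^ card (S - B - {a})" .
    show ?thesis by (simp only: if_P[OF True] cC)
  next
    case False
    then have "C = {}" unfolding C_def by auto
    then show ?thesis by (simp only: if_not_P[OF False] card.empty of_nat_0)
  qed
  finally show ?thesis .
qed

lemma anf_prod_nz:
  assumes "finite S" "finite B" "a \<notin> B" "anf_coeff (\<lambda>x. x a * (\<Prod>b\<in>B. x b + 1)) S \<noteq> 0"
  shows "S \<subseteq> insert a B"
proof -
  have "a \<in> S" "card (S - B - {a}) = 0"
    using assms(4) unfolding anf_prod[OF assms(1-3)] bit_of_nat_pow2 by (auto split: if_splits)
  then have "S - B - {a} = {}" using assms(1) by simp
  then show ?thesis by blast
qed

lemma anf_prod_top:
  assumes "finite B" "a \<notin> B"
  shows "anf_coeff (\<lambda>x. x a * (\<Prod>b\<in>B. x b + 1)) (insert a B) = 1"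
proof -
  have e: "insert a B - B - {a} = {}" by blast
  have "anf_coeff (\<lambda>x. x a * (\<Prod>b\<in>B. x b + 1)) (insert a B) =
     (if a \<in> insert a B then of_nat (2 ^ card (insert a B - B - {a})) else 0)"
    by (rule anf_prod) (use assms in auto)
  also have "\<dots> = 1" unfolding e by simp
  finally show ?thesis .
qed



lemma mk_lt:
  fixes n m k :: nat
  assumes "n \<ge> 1" "m \<ge> 2" "\<not> m dvd n" "k \<le> n div m"
  shows "m * k < n"
proof -
  have "m * k \<le> m * (n div m)" using assms(4) by (intro mult_le_mono) auto
  also have "\<dots> \<le> n" by simp
  finally have "m * k \<le> n" .
  moreover have "m * k \<noteq> n" using assms(3) by auto
  ultimately show ?thesis by simp
qed

lemma Zs_sub:
  assumes "n \<ge> 1" "m \<ge> 2" "\<not> m dvd n" "k \<le> n div m"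
  shows "Zs m k \<subseteq> {0..<n}"
  using mk_lt[OF assms] unfolding Zs_alt by auto

definition ak :: "nat \<Rightarrow> nat \<Rightarrow> nat \<Rightarrow> nat \<Rightarrow> nat" where
  "ak n m i k = (i + m * k) mod n"

definition Bk :: "nat \<Rightarrow> nat \<Rightarrow> nat \<Rightarrow> nat \<Rightarrow> nat set" where
  "Bk n m i k = (\<lambda>j. (i + j) mod n) ` Zs m k"

lemma Bk_finite: "finite (Bk n m i k)"
  unfolding Bk_def using Zs_finite by simp

lemma ak_notin:
  assumes "n \<ge> 1" "m \<ge> 2" "\<not> m dvd n" "k \<le> n div m"
  shows "ak n m i k \<notin> Bk n m i k"
proof
  assume "ak n m i k \<in> Bk n m i k"
  then obtain j where j: "j \<in> Zs m k" "(i + m * k) mod n = (i + j) mod n"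
    unfolding ak_def Bk_def by auto
  have "m * k \<in> {0..<n}" "j \<in> {0..<n}" using mk_lt[OF assms] Zs_sub[OF assms] j(1) by auto
  then have "m * k = j" using inj_onD[OF mod_shift_inj j(2)] by blast
  then show False using j(1) unfolding Zs_alt by auto
qed

lemma card_S:
  assumes "n \<ge> 1" "m \<ge> 2" "\<not> m dvd n" "k \<le> n div m"
  shows "card (insert (ak n m i k) (Bk n m i k)) = Suc ((m - 1) * k)"
proof -
  have "card (Bk n m i k) = card (Zs m k)"
    unfolding Bk_def by (rule card_image) (rule inj_on_subset[OF mod_shift_inj Zs_sub[OF assms]])
  then show ?thesis using ak_notin[OF assms] Bk_finite card_Zs[of m k] assms(2) by simp
qed

lemma S_sub:
  assumes "n \<ge> 1" 
  shows "insert (ak n m i k) (Bk n m i k) \<subseteq> {0..<n}"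
  using assms unfolding ak_def Bk_def by auto

lemma theta_form:
  assumes "n \<ge> 1" "m \<ge> 2" "\<not> m dvd n" "k \<le> n div m" "i < n"
  shows "(\<lambda>x. theta n m k x i) = (\<lambda>x. x (ak n m i k) * (\<Prod>b\<in>Bk n m i k. x b + 1))"
proof
  fix x :: "nat \<Rightarrow> bit"
  have inj: "inj_on (\<lambda>j. (i + j) mod n) (Zs m k)"
    by (rule inj_on_subset[OF mod_shift_inj Zs_sub[OF assms(1-4)]])
  have r: "(\<Prod>b\<in>Bk n m i k. x b + 1) = (\<Prod>j\<in>Zs m k. x ((i + j) mod n) + 1)"
    unfolding Bk_def by (subst prod.reindex[OF inj]) simp
  show "theta n m k x i = x (ak n m i k) * (\<Prod>b\<in>Bk n m i k. x b + 1)"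
  proof (cases "k = 0")
    case True
    have "Zs m 0 = {}" unfolding Zs_alt by simp
    then show ?thesis unfolding r using True assms(5) by (simp add: theta_def ak_def)
  next
    case False
    then show ?thesis unfolding r using assms(5) by (simp add: theta_def ak_def Zs_def)
  qed
qed

lemma deg_coord:
  assumes "n \<ge> 1" "m \<ge> 2" "\<not> m dvd n" "i < n"
  shows "bool_degree n (\<lambda>x. theta_sum n m (n div m) x i) = (m - 1) * (n div m) + 1"
proof -
  define l where "l = n div m"
  define D where "D = (m - 1) * l + 1"
  define f :: "nat \<Rightarrow> (nat \<Rightarrow> bit) \<Rightarrow> bit" where "f k = (\<lambda>x. x (ak n m i k) * (\<Prod>b\<in>Bk n m i k. x b + 1))" for k
  have coef: "anf_coeff (\<lambda>x. theta_sum n m l x i) S = (\<Sum>k\<in>{0..l}. anf_coeff (f k) S)" for S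
  proof -
    have "anf_coeff (\<lambda>x. theta_sum n m l x i) S = (\<Sum>k\<in>{0..l}. anf_coeff (\<lambda>x. theta n m k x i) S)"
      unfolding theta_sum_def by (rule anf_sum) simp
    also have "\<dots> = (\<Sum>k\<in>{0..l}. anf_coeff (f k) S)"
    proof (rule sum.cong)
      fix k assume "k \<in> {0..l}"
      then have kk: "k \<le> n div m" unfolding l_def by simp
      show "anf_coeff (\<lambda>x. theta n m k x i) S = anf_coeff (f k) S"
        unfolding f_def theta_form[OF assms(1-3) kk assms(4)] ..
    qed simp
    finally show ?thesis .
  qed
  have nz: "S \<subseteq> insert (ak n m i k) (Bk n m i k)" if "S \<subseteq> {0..<n}" "k \<le> l" "anf_coeff (f k) S \<noteq> 0" for S k
    using anf_prod_nz[OF finite_subset[OF that(1)] Bk_finite ak_notin[OF assms(1-3)]] that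
    unfolding f_def l_def by blast
  have upper: "card S \<le> D" if uS: "S \<subseteq> {0..<n}" and uN: "anf_coeff (\<lambda>x. theta_sum n m l x i) S \<noteq> 0" for S
  proof -
    obtain k where k: "k \<in> {0..l}" "anf_coeff (f k) S \<noteq> 0"
      using uN unfolding coef by (meson sum.neutral)
    then have "S \<subseteq> insert (ak n m i k) (Bk n m i k)" using nz uS by simp
    then have "card S \<le> card (insert (ak n m i k) (Bk n m i k))"
      by (rule card_mono[rotated]) (simp add: Bk_finite)
    also have "\<dots> = Suc ((m - 1) * k)" using card_S[OF assms(1-3)] k(1) unfolding l_def by simp
    also have "\<dots> \<le> D" unfolding D_def using k(1) by simp
    finally show ?thesis .
  qed
  define St where "St = insert (ak n m i l) (Bk n m i l)"
  have St_sub: "St \<subseteq> {0..<n}" unfolding St_def by (rule S_sub[OF assms(1)])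
  have St_card: "card St = D" unfolding St_def D_def l_def using card_S[OF assms(1-3)] by simp
  have top: "anf_coeff (\<lambda>x. theta_sum n m l x i) St = 1"
  proof -
    have "anf_coeff (f k) St = (if k = l then 1 else 0)" if "k \<in> {0..l}" for k
    proof (cases "k = l")
      case True
      then show ?thesis unfolding f_def St_def
        using anf_prod_top[OF Bk_finite ak_notin[OF assms(1-3)]] l_def by simp
    next
      case False
      then have kl: "k < l" using that by simp
      have "anf_coeff (f k) St = 0"
      proof (rule ccontr)
        assume "anf_coeff (f k) St \<noteq> 0"
        then have "St \<subseteq> insert (ak n m i k) (Bk n m i k)" using nz St_sub kl by simp
        then have "card St \<le> card (insert (ak n m i k) (Bk n m i k))"
          by (rule card_mono[rotated]) (simp add: Bk_finite)
        also have "\<dots> = Suc ((m - 1) * k)" using card_S[OF assms(1-3)] kl unfolding l_def by simp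
        finally have "Suc ((m - 1) * l) \<le> Suc ((m - 1) * k)" using St_card unfolding D_def by simp
        moreover have "(m - 1) * k < (m - 1) * l" using kl assms(2) by simp
        ultimately show False by simp
      qed
      then show ?thesis using False by simp
    qed
    then have "(\<Sum>k\<in>{0..l}. anf_coeff (f k) St) = (\<Sum>k\<in>{0..l}. if k = l then 1 else 0)"
      by (rule sum.cong[OF refl])
    also have "\<dots> = 1" by simp
    finally show ?thesis unfolding coef .
  qed
  define A where "A = {card S | S. S \<subseteq> {0..<n} \<and> anf_coeff (\<lambda>x. theta_sum n m l x i) S \<noteq> 0} \<union> {0}"
  have "Max A = D"
  proof (rule Max_eqI)
    have "A \<subseteq> card ` Pow {0..<n} \<union> {0}" unfolding A_def by auto
    then show "finite A" by (rule finite_subset) simp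
  next
    fix y assume "y \<in> A"
    then show "y \<le> D" unfolding A_def using upper by auto
  next
    show "D \<in> A" unfolding A_def using St_sub St_card top by force
  qed
  then show ?thesis unfolding bool_degree_def A_def D_def l_def .
qed

lemma bool_degree_cong:
  assumes "\<And>S. S \<subseteq> {0..<n} \<Longrightarrow> anf_coeff f S = anf_coeff g S"
  shows "bool_degree n f = bool_degree n g"
proof -
  have "{card S | S. S \<subseteq> {0..<n} \<and> anf_coeff f S \<noteq> 0} = {card S | S. S \<subseteq> {0..<n} \<and> anf_coeff g S \<noteq> 0}"
    using assms by metis
  then show ?thesis unfolding bool_degree_def by simp
qed

theorem corollary2:
  fixes n m :: nat
  assumes "n \<ge> 1" and "m \<ge> 2"
  shows "(bij_betw (chi n m) (vecs n) (vecs n) \<longleftrightarrow> \<not> m dvd n) \<and>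
         (\<not> m dvd n \<longrightarrow>
            (\<forall>x\<in>vecs n. the_inv_into (vecs n) (chi n m) x = theta_sum n m (n div m) x) \<and>
            alg_degree n (the_inv_into (vecs n) (chi n m)) = (m - 1) * (n div m) + 1)"
proof (intro conjI impI)
  show "bij_betw (chi n m) (vecs n) (vecs n) \<longleftrightarrow> \<not> m dvd n"
    using bij_if[OF assms] not_bij_if[OF assms] by blast
next
  assume nd: "\<not> m dvd n"
  show "\<forall>x\<in>vecs n. the_inv_into (vecs n) (chi n m) x = theta_sum n m (n div m) x"
    using inv_eq[OF assms nd] by blast
next
  assume nd: "\<not> m dvd n"
  define F where "F = the_inv_into (vecs n) (chi n m)"
  define D where "D = (m - 1) * (n div m) + 1"
  have bd: "bool_degree n (\<lambda>x. F x i) = D" if "i < n" for i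
  proof -
    have "bool_degree n (\<lambda>x. F x i) = bool_degree n (\<lambda>x. theta_sum n m (n div m) x i)"
    proof (rule bool_degree_cong)
      fix S assume S: "S \<subseteq> {0..<n}"
      show "anf_coeff (\<lambda>x. F x i) S = anf_coeff (\<lambda>x. theta_sum n m (n div m) x i) S"
      proof (rule anf_cong)
        fix T assume "T \<subseteq> S"
        then have "ind_vec T \<in> vecs n" using S unfolding vecs_def ind_vec_def by auto
        then show "F (ind_vec T) i = theta_sum n m (n div m) (ind_vec T) i"
          unfolding F_def using inv_eq[OF assms nd] by simp
      qed
    qed
    also have "\<dots> = D" unfolding D_def by (rule deg_coord[OF assms nd that])
    finally show ?thesis .
  qed
  have "Max ({bool_degree n (\<lambda>x. F x i) | i. i < n} \<union> {0}) = D"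
  proof (rule Max_eqI)
    have "{bool_degree n (\<lambda>x. F x i) | i. i < n} \<union> {0} \<subseteq> {D, 0}" using bd by auto
    then show "finite ({bool_degree n (\<lambda>x. F x i) | i. i < n} \<union> {0})" by (rule finite_subset) simp
  next
    fix y assume "y \<in> {bool_degree n (\<lambda>x. F x i) | i. i < n} \<union> {0}"
    then show "y \<le> D" using bd by auto
  next
    show "D \<in> {bool_degree n (\<lambda>x. F x i) | i. i < n} \<union> {0}" using bd[of 0] assms(1) by auto
  qed
  then show "alg_degree n (the_inv_into (vecs n) (chi n m)) = (m - 1) * (n div m) + 1"
    unfolding alg_degree_def F_def D_def .
qed

end
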